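(* Let $M := \langle X \mid R\rangle$ and let $Y := \{x\in X \mid \exists\, a,b,c\in\langle X\rangle \text{ such that } (axb,c)\in R \text{ or } (c,axb)\in R\}$. If $M$ has accepted elasticity and $X \neq Y$, then $M$ is fully elastic.
   Context: For a set $X$, $\langle X\rangle$ is the free monoid on $X$ (identity $1$); $M=\langle X\mid R\rangle$ is the monoid presented by generators $X$ and relations $R\subseteq\langle X\rangle\times\langle X\rangle$. $|a|$ is word length; $a=_M b$ means equal images in $M$. $\mathsf{L}_M(a) := \{|b| : b\in\langle X\rangle,\ b=_M a\}$, $\mathcal{L}(M):=\{\mathsf{L}_M(a): a\in\langle X\rangle\}$. For $L\subseteq\mathbb{N}$, $\rho(L) := \sup(L\cap\mathbb{N}^+)/\min(L\cap\mathbb{N}^+)\in\mathbb{Q}^+\cup\{\infty\}$ if $L\cap\mathbb{N}^+\neq\emptyset$, and $\rho(L):=0$ otherwise. $\rho(M) := \sup\{\rho(L) : L\in\mathcal{L}(M)\}$. $M$ has accepted elasticity if $\rho(M) = \rho(L) < \infty$ for some $L\in\mathcal{L}(M)$. $M$ is fully elastic if for every $q\in\mathbb{Q}$ with $1<q<\rho(M)$ there is $L\in\mathcal{L}(M)$ with $\rho(L) = q$. *)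

theory Defs
  imports Complex_Main "HOL-Library.Extended_Real"
begin

text \<open>The free monoid on X is modelled as lists over X (words in lists X), identity [].
  The monoid M = <X | R> is modelled by the congruence on lists X generated by R:
  two words have equal image in M iff they are related by pres_eq X R.\<close>

inductive pres_eq :: "'a set \<Rightarrow> ('a list \<times> 'a list) set \<Rightarrow> 'a list \<Rightarrow> 'a list \<Rightarrow> bool"
  for X :: "'a set" and R :: "('a list \<times> 'a list) set" where
  pe_refl: "a \<in> lists X \<Longrightarrow> pres_eq X R a a"
| pe_rel: "(u, v) \<in> R \<Longrightarrow> p \<in> lists X \<Longrightarrow> s \<in> lists X \<Longrightarrow> pres_eq X R (p @ u @ s) (p @ v @ s)"
| pe_sym: "pres_eq X R a b \<Longrightarrow> pres_eq X R b a"
| pe_trans: "pres_eq X R a b \<Longrightarrow> pres_eq X R b c \<Longrightarrow> pres_eq X R a c"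

definition length_set :: "'a set \<Rightarrow> ('a list \<times> 'a list) set \<Rightarrow> 'a list \<Rightarrow> nat set" where
  "length_set X R a = {length b | b. b \<in> lists X \<and> pres_eq X R b a}"

definition length_sets :: "'a set \<Rightarrow> ('a list \<times> 'a list) set \<Rightarrow> nat set set" where
  "length_sets X R = {length_set X R a | a. a \<in> lists X}"

definition rho_set :: "nat set \<Rightarrow> ereal" where
  "rho_set L = (if L \<inter> {1..} = {} then 0
     else Sup ((\<lambda>n. ereal (real n)) ` (L \<inter> {1..})) / ereal (real (Min (L \<inter> {1..}))))"

definition elasticity :: "'a set \<Rightarrow> ('a list \<times> 'a list) set \<Rightarrow> ereal" where
  "elasticity X R = Sup (rho_set ` length_sets X R)"

definition accepted_elasticity :: "'a set \<Rightarrow> ('a list \<times> 'a list) set \<Rightarrow> bool" where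
  "accepted_elasticity X R \<longleftrightarrow>
     (\<exists>L \<in> length_sets X R. elasticity X R = rho_set L \<and> rho_set L < \<infinity>)"

definition fully_elastic :: "'a set \<Rightarrow> ('a list \<times> 'a list) set \<Rightarrow> bool" where
  "fully_elastic X R \<longleftrightarrow>
     (\<forall>q :: rat. 1 < q \<and> ereal (real_of_rat q) < elasticity X R \<longrightarrow>
        (\<exists>L \<in> length_sets X R. rho_set L = ereal (real_of_rat q)))"

definition rel_letters :: "'a set \<Rightarrow> ('a list \<times> 'a list) set \<Rightarrow> 'a set" where
  "rel_letters X R = {x \<in> X. \<exists>a b c. a \<in> lists X \<and> b \<in> lists X \<and> c \<in> lists X \<and>
      ((a @ [x] @ b, c) \<in> R \<or> (c, a @ [x] @ b) \<in> R)}"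

end

theory Submission
  imports Defs
begin

lemma rho_fin:
  assumes "finite (L \<inter> {1..})" "L \<inter> {1..} \<noteq> {}"
  shows "rho_set L = ereal (real (Max (L \<inter> {1..})) / real (Min (L \<inter> {1..})))"
proof -
  let ?S = "L \<inter> {1..}"
  have m: "Min ?S \<ge> 1" using assms by auto
  have "Sup ((\<lambda>n. ereal (real n)) ` ?S) = Max ((\<lambda>n. ereal (real n)) ` ?S)"
    using assms by (intro cSup_eq_Max) auto
  also have "\<dots> = ereal (real (Max ?S))"
    using assms by (intro mono_Max_commute[symmetric]) (auto simp: mono_def)
  finally show ?thesis using assms m unfolding rho_set_def by simp
qed

lemma rho_inf:
  assumes "infinite (L \<inter> {1..})"
  shows "rho_set L = \<infinity>"
proof -
  let ?S = "L \<inter> {1..}"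
  have "?S \<noteq> {}" using assms by auto
  have "Sup ((\<lambda>n. ereal (real n)) ` ?S) = top"
    unfolding SUP_eq_top_iff
  proof (intro allI impI)
    fix y :: ereal assume "y < top"
    then obtain r where "y \<le> ereal r" by (cases y) (auto simp: top_ereal_def)
    obtain n where "n \<in> ?S" "n > nat (ceiling r)"
      using assms unfolding infinite_nat_iff_unbounded by blast
    then have "r < real n" using real_nat_ceiling_ge[of r] by linarith
    then have "ereal r < ereal (real n)" by simp
    then show "\<exists>i\<in>?S. y < ereal (real i)" using \<open>n \<in> ?S\<close> \<open>y \<le> ereal r\<close> by (meson le_less_trans)
  qed
  then show ?thesis using \<open>?S \<noteq> {}\<close> unfolding rho_set_def top_ereal_def
    by (cases "Min ?S = 0") (auto simp: divide_ereal_def)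
qed

lemma tl_dw_lists: "a \<in> lists X \<Longrightarrow> tl (dropWhile P a) \<in> lists X"
  by (induction a) auto

lemma dw_cons: "x \<in> set p \<Longrightarrow> dropWhile (\<lambda>y. y \<noteq> x) p = x # tl (dropWhile (\<lambda>y. y \<noteq> x) p)"
  by (induction p) auto

lemma tw_app: "x \<notin> set p \<Longrightarrow> takeWhile (\<lambda>y. y \<noteq> x) (p @ z) = p @ takeWhile (\<lambda>y. y \<noteq> x) z"
  by (induction p) auto

lemma dw_app: "x \<notin> set p \<Longrightarrow> dropWhile (\<lambda>y. y \<noteq> x) (p @ z) = dropWhile (\<lambda>y. y \<noteq> x) z"
  by (induction p) auto

lemma rho_le_elast: "L \<in> length_sets X R \<Longrightarrow> rho_set L \<le> elasticity X R"
  unfolding elasticity_def by (rule Sup_upper) auto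

context
  fixes X :: "'a set" and R :: "('a list \<times> 'a list) set"
  assumes RX: "R \<subseteq> lists X \<times> lists X"
begin

lemma pe_lists: "pres_eq X R a b \<Longrightarrow> a \<in> lists X \<and> b \<in> lists X"
  by (induction rule: pres_eq.induct) (use RX in auto)

lemma pe_right: "pres_eq X R a b \<Longrightarrow> c \<in> lists X \<Longrightarrow> pres_eq X R (a @ c) (b @ c)"
proof (induction rule: pres_eq.induct)
  case (pe_refl a) then show ?case by (intro pres_eq.pe_refl) auto
next
  case (pe_rel u v p s) then show ?case using pres_eq.pe_rel[where u=u and v=v and p=p and s="s @ c" and X=X and R=R] by auto
next
  case (pe_sym a b) then show ?case by (auto intro: pres_eq.pe_sym)
next
  case (pe_trans a b c') then show ?case by (auto intro: pres_eq.pe_trans)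
qed

lemma pe_left: "pres_eq X R a b \<Longrightarrow> c \<in> lists X \<Longrightarrow> pres_eq X R (c @ a) (c @ b)"
proof (induction rule: pres_eq.induct)
  case (pe_refl a) then show ?case by (intro pres_eq.pe_refl) auto
next
  case (pe_rel u v p s) then show ?case using pres_eq.pe_rel[where u=u and v=v and p="c @ p" and s=s and X=X and R=R] by auto
next
  case (pe_sym a b) then show ?case by (auto intro: pres_eq.pe_sym)
next
  case (pe_trans a b c') then show ?case by (auto intro: pres_eq.pe_trans)
qed

lemma pe_app: "pres_eq X R a b \<Longrightarrow> pres_eq X R c d \<Longrightarrow> pres_eq X R (a @ c) (b @ d)"
  by (meson pe_left pe_lists pe_right pres_eq.pe_trans)

lemma pe_rep: "pres_eq X R a b \<Longrightarrow> pres_eq X R (concat (replicate n a)) (concat (replicate n b))"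
  by (induction n) (auto intro: pe_app pres_eq.pe_refl)


context
  fixes x :: 'a
  assumes xX: "x \<in> X" and xnot: "x \<notin> rel_letters X R"
begin

lemma rel_nox: "(u, v) \<in> R \<Longrightarrow> x \<notin> set u \<and> x \<notin> set v"
proof -
  assume uv: "(u, v) \<in> R"
  have nox: False if hw: "x \<in> set w" "w \<in> lists X" "(w, c) \<in> R \<or> (c, w) \<in> R" "c \<in> lists X" for w c
  proof -
    obtain a b where "w = a @ x # b" using split_list[OF hw(1)] by blast
    then have "x \<in> rel_letters X R" using hw xX unfolding rel_letters_def
      by (intro CollectI conjI exI[of _ a] exI[of _ b] exI[of _ c]) auto
    then show False using xnot by blast
  qed
  show ?thesis using uv RX nox[of u v] nox[of v u] by blast
qed

lemma pe_split:
  "pres_eq X R u v \<Longrightarrow> (x \<in> set u \<longleftrightarrow> x \<in> set v) \<and>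
    (x \<in> set u \<longrightarrow> pres_eq X R (takeWhile (\<lambda>y. y \<noteq> x) u) (takeWhile (\<lambda>y. y \<noteq> x) v)
       \<and> pres_eq X R (tl (dropWhile (\<lambda>y. y \<noteq> x) u)) (tl (dropWhile (\<lambda>y. y \<noteq> x) v)))"
proof (induction rule: pres_eq.induct)
  case (pe_refl a)
  have "takeWhile (\<lambda>y. y \<noteq> x) a \<in> lists X" "tl (dropWhile (\<lambda>y. y \<noteq> x) a) \<in> lists X"
    using pe_refl by (auto dest: set_takeWhileD simp: tl_dw_lists)
  then show ?case by (auto intro: pres_eq.pe_refl)
next
  case (pe_rel u v p s)
  have nu: "x \<notin> set u" "x \<notin> set v" using rel_nox[OF pe_rel(1)] by auto
  have uvX: "u \<in> lists X" "v \<in> lists X" using pe_rel(1) RX by auto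
  show ?case
  proof (cases "x \<in> set p")
    case True
    let ?t = "takeWhile (\<lambda>y. y \<noteq> x) p" and ?d = "dropWhile (\<lambda>y. y \<noteq> x) p"
    have d: "?d = x # tl ?d" using True
      by (rule dw_cons)
    have tX: "?t \<in> lists X" using pe_rel(2) by (auto dest: set_takeWhileD)
    have dX: "tl ?d \<in> lists X" using pe_rel(2) by (simp add: tl_dw_lists)
    have "pres_eq X R (tl ?d @ u @ s) (tl ?d @ v @ s)"
      using pres_eq.pe_rel[where u=u and v=v and p="tl ?d" and s=s and X=X and R=R] pe_rel dX by auto
    then show ?thesis using True d tX
      by (simp add: takeWhile_append1 dropWhile_append1 pres_eq.pe_refl)
  next
    case False
    show ?thesis
    proof (cases "x \<in> set s")
      case True
      let ?t = "takeWhile (\<lambda>y. y \<noteq> x) s" and ?d = "dropWhile (\<lambda>y. y \<noteq> x) s"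
      have d: "?d = x # tl ?d" using True
        by (rule dw_cons)
      have tX: "?t \<in> lists X" using pe_rel(3) by (auto dest: set_takeWhileD)
      have dX: "tl ?d \<in> lists X" using pe_rel(3) by (simp add: tl_dw_lists)
      have "pres_eq X R (p @ u @ ?t) (p @ v @ ?t)"
        using pres_eq.pe_rel[where u=u and v=v and p=p and s="?t" and X=X and R=R] pe_rel tX by auto
      then show ?thesis using True False nu dX
        by (simp add: tw_app dw_app pres_eq.pe_refl)
    next
      case False2: False
      then show ?thesis using False nu by simp
    qed
  qed
next
  case (pe_sym a b)
  have e: "x \<in> set a \<longleftrightarrow> x \<in> set b" using pe_sym.IH by blast
  show ?case
  proof (intro conjI impI)
    assume "x \<in> set b"
    then have "x \<in> set a" using e by blast
    then have h: "pres_eq X R (takeWhile (\<lambda>y. y \<noteq> x) a) (takeWhile (\<lambda>y. y \<noteq> x) b)"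
      "pres_eq X R (tl (dropWhile (\<lambda>y. y \<noteq> x) a)) (tl (dropWhile (\<lambda>y. y \<noteq> x) b))"
      using pe_sym.IH by blast+
    show "pres_eq X R (takeWhile (\<lambda>y. y \<noteq> x) b) (takeWhile (\<lambda>y. y \<noteq> x) a)"
      by (rule pres_eq.pe_sym[OF h(1)])
    show "pres_eq X R (tl (dropWhile (\<lambda>y. y \<noteq> x) b)) (tl (dropWhile (\<lambda>y. y \<noteq> x) a))"
      by (rule pres_eq.pe_sym[OF h(2)])
  qed (use e in blast)
next
  case (pe_trans a b c)
  have e1: "x \<in> set a \<longleftrightarrow> x \<in> set b" using pe_trans.IH(1) by blast
  have e2: "x \<in> set b \<longleftrightarrow> x \<in> set c" using pe_trans.IH(2) by blast
  show ?case
  proof (intro conjI impI)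
    assume xa: "x \<in> set a"
    then have xb: "x \<in> set b" using e1 by blast
    have h: "pres_eq X R (takeWhile (\<lambda>y. y \<noteq> x) a) (takeWhile (\<lambda>y. y \<noteq> x) b)"
      "pres_eq X R (tl (dropWhile (\<lambda>y. y \<noteq> x) a)) (tl (dropWhile (\<lambda>y. y \<noteq> x) b))"
      using pe_trans.IH(1) xa by blast+
    have k: "pres_eq X R (takeWhile (\<lambda>y. y \<noteq> x) b) (takeWhile (\<lambda>y. y \<noteq> x) c)"
      "pres_eq X R (tl (dropWhile (\<lambda>y. y \<noteq> x) b)) (tl (dropWhile (\<lambda>y. y \<noteq> x) c))"
      using pe_trans.IH(2) xb by blast+
    show "pres_eq X R (takeWhile (\<lambda>y. y \<noteq> x) a) (takeWhile (\<lambda>y. y \<noteq> x) c)"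
      by (rule pres_eq.pe_trans[OF h(1) k(1)])
    show "pres_eq X R (tl (dropWhile (\<lambda>y. y \<noteq> x) a)) (tl (dropWhile (\<lambda>y. y \<noteq> x) c))"
      by (rule pres_eq.pe_trans[OF h(2) k(2)])
  qed (use e1 e2 in blast)
qed

lemma pe_cons_x:
  assumes "pres_eq X R b (x # w)"
  shows "\<exists>c d. b = c @ x # d \<and> pres_eq X R c [] \<and> pres_eq X R d w"
proof -
  have h: "pres_eq X R (x # w) b" using assms by (rule pres_eq.pe_sym)
  note sp = pe_split[OF h]
  have xb: "x \<in> set b" using sp by simp
  have 1: "pres_eq X R [] (takeWhile (\<lambda>y. y \<noteq> x) b)" using sp by simp
  have 2: "pres_eq X R w (tl (dropWhile (\<lambda>y. y \<noteq> x) b))" using sp by simp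
  have "b = takeWhile (\<lambda>y. y \<noteq> x) b @ x # tl (dropWhile (\<lambda>y. y \<noteq> x) b)"
    using dw_cons[OF xb] takeWhile_dropWhile_id[of "\<lambda>y. y \<noteq> x" b] by simp
  then show ?thesis using pres_eq.pe_sym[OF 1] pres_eq.pe_sym[OF 2] by blast
qed

lemma pe_nil:
  assumes fin: "elasticity X R < \<infinity>" and c: "pres_eq X R c []"
  shows "c = []"
proof (rule ccontr)
  assume cne: "c \<noteq> []"
  let ?L = "length_set X R [x]"
  have mem: "k * length c + 1 \<in> ?L" for k
  proof -
    have "pres_eq X R (concat (replicate k c)) (concat (replicate k []))" by (rule pe_rep[OF c])
    then have "pres_eq X R ([x] @ concat (replicate k c)) ([x] @ [])"
      using xX by (intro pe_left) auto
    moreover have "x # concat (replicate k c) \<in> lists X" using pe_lists[OF c] xX by auto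
    ultimately show ?thesis unfolding length_set_def
      by (intro CollectI exI[of _ "x # concat (replicate k c)"]) (auto simp: length_concat sum_list_replicate)
  qed
  have "infinite (?L \<inter> {1..})"
    unfolding infinite_nat_iff_unbounded
  proof
    fix m
    have "m < (m + 1) * length c + 1" using cne by (cases c) auto
    then show "\<exists>n>m. n \<in> ?L \<inter> {1..}" using mem[of "m+1"] by (intro exI[of _ "(m + 1) * length c + 1"]) auto
  qed
  then have "rho_set ?L = \<infinity>" by (rule rho_inf)
  moreover have "?L \<in> length_sets X R" unfolding length_sets_def using xX by auto
  ultimately have "\<infinity> \<le> elasticity X R" using rho_le_elast by metis
  then show False using fin by simp
qed

lemma pe_shift:
  assumes fin: "elasticity X R < \<infinity>"
  shows "pres_eq X R b (replicate j x @ w) \<Longrightarrow> \<exists>d. b = replicate j x @ d \<and> pres_eq X R d w"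
proof (induction j arbitrary: b)
  case 0 then show ?case by auto
next
  case (Suc j)
  have "pres_eq X R b (x # (replicate j x @ w))" using Suc.prems by simp
  then obtain c d where "b = c @ x # d" "pres_eq X R c []" "pres_eq X R d (replicate j x @ w)"
    using pe_cons_x by blast
  moreover have "c = []" using pe_nil[OF fin \<open>pres_eq X R c []\<close>] .
  moreover obtain e where "d = replicate j x @ e" "pres_eq X R e w" using Suc.IH[OF \<open>pres_eq X R d _\<close>] by blast
  ultimately show ?case by auto
qed

lemma ls_shift:
  assumes fin: "elasticity X R < \<infinity>" and w: "w \<in> lists X"
  shows "length_set X R (replicate j x @ w) = (\<lambda>l. l + j) ` length_set X R w"
proof
  show "length_set X R (replicate j x @ w) \<subseteq> (\<lambda>l. l + j) ` length_set X R w"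
  proof
    fix l assume "l \<in> length_set X R (replicate j x @ w)"
    then obtain b where b: "l = length b" "pres_eq X R b (replicate j x @ w)"
      unfolding length_set_def by auto
    then obtain d where "b = replicate j x @ d" "pres_eq X R d w" using pe_shift[OF fin] by blast
    moreover have "d \<in> lists X" using pe_lists[OF \<open>pres_eq X R d w\<close>] by simp
    ultimately show "l \<in> (\<lambda>l. l + j) ` length_set X R w" unfolding length_set_def
      using b by (intro image_eqI[of _ _ "length d"]) auto
  qed
next
  show "(\<lambda>l. l + j) ` length_set X R w \<subseteq> length_set X R (replicate j x @ w)"
  proof
    fix l assume "l \<in> (\<lambda>l. l + j) ` length_set X R w"
    then obtain d where d: "l = length d + j" "pres_eq X R d w" "d \<in> lists X"
      unfolding length_set_def by auto
    have "pres_eq X R (replicate j x @ d) (replicate j x @ w)" using d xX by (intro pe_left) auto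
    then show "l \<in> length_set X R (replicate j x @ w)" unfolding length_set_def using d xX
      by (intro CollectI exI[of _ "replicate j x @ d"]) auto
  qed
qed

end

end


theorem theorem4p5:
  fixes X :: "'a set" and R :: "('a list \<times> 'a list) set"
  assumes "R \<subseteq> lists X \<times> lists X"
    and "accepted_elasticity X R"
    and "X \<noteq> rel_letters X R"
  shows "fully_elastic X R"
  unfolding fully_elastic_def
proof (intro allI impI, elim conjE)
  note RX = assms(1)
  fix q :: rat
  assume q1: "1 < q" and qlt: "ereal (real_of_rat q) < elasticity X R"
  obtain L0 where L0: "L0 \<in> length_sets X R" "elasticity X R = rho_set L0" "rho_set L0 < \<infinity>"
    using assms(2) unfolding accepted_elasticity_def by blast
  have fin: "elasticity X R < \<infinity>" using L0 by simp
  obtain a where a: "a \<in> lists X" "L0 = length_set X R a" using L0(1) unfolding length_sets_def by blast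
  obtain x where xX: "x \<in> X" and xnot: "x \<notin> rel_letters X R"
    using assms(3) unfolding rel_letters_def by blast
  let ?S = "L0 \<inter> {1..}"
  have Sne: "?S \<noteq> {}"
  proof
    assume "?S = {}"
    then have "rho_set L0 = 0" unfolding rho_set_def by simp
    then show False using qlt L0(2) q1
      by (metis ereal_less_eq(3) less_le_not_le of_rat_less_1_iff linorder_not_le order_less_imp_le
          zero_ereal_def of_rat_0 less_trans zero_less_one of_rat_less)
  qed
  have Sfin: "finite ?S"
  proof (rule ccontr)
    assume "infinite ?S"
    then have "rho_set L0 = \<infinity>" by (rule rho_inf)
    then show False using L0 by simp
  qed
  define Mx where "Mx = Max ?S"
  define m where "m = Min ?S"
  have MxS: "Mx \<in> ?S" and mS: "m \<in> ?S" unfolding Mx_def m_def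
    using Max_in[OF Sfin Sne] Min_in[OF Sfin Sne] by blast+
  have m1: "m \<ge> 1" using mS by auto
  have mMx: "m \<le> Mx" using Sfin Sne unfolding Mx_def m_def by (meson Max_ge Min_in)
  have rhoL0: "rho_set L0 = ereal (real Mx / real m)" unfolding Mx_def m_def by (rule rho_fin[OF Sfin Sne])
  have qr: "real_of_rat q < real Mx / real m" using qlt L0(2) rhoL0 by simp
  obtain bM where bM: "bM \<in> lists X" "pres_eq X R bM a" "length bM = Mx"
    using MxS a(2) unfolding length_set_def by auto
  obtain bm where bm: "bm \<in> lists X" "pres_eq X R bm a" "length bm = m"
    using mS a(2) unfolding length_set_def by auto
  have ane: "a \<noteq> []"
  proof
    assume "a = []"
    then have "bM = []" using pe_nil[OF RX xX xnot fin] bM(2) by simp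
    then show False using bM(3) m1 mMx by simp
  qed
  obtain p r where pr: "quotient_of q = (p, r)" by (cases "quotient_of q") auto
  have r0: "r > 0" using quotient_of_denom_pos[OF pr] .
  have qpr: "real_of_rat q = real_of_int p / real_of_int r"
    using quotient_of_div[OF pr] by (simp add: of_rat_divide)
  have "1 < real_of_int p / real_of_int r" using q1 qpr by (metis of_rat_less_1_iff of_rat_1 of_rat_less)
  then have pgr: "p > r" using r0 by (simp add: less_divide_eq)
  have "real_of_int p / real_of_int r < real Mx / real m" using qr qpr by simp
  then have "real_of_int p * real m < real Mx * real_of_int r" using r0 m1
    by (simp add: divide_less_eq less_divide_eq field_simps)
  then have pm: "p * int m < int Mx * r"
    by (metis of_int_less_iff of_int_mult of_int_of_nat_eq)
  define n where "n = nat (p - r)"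
  define j where "j = nat (r * int Mx - p * int m)"
  have n1: "n \<ge> 1" and nint: "int n = p - r" using pgr unfolding n_def by auto
  have j1: "j \<ge> 1" and jint: "int j = r * int Mx - p * int m" using pm unfolding j_def by (auto simp: mult.commute)
  define An where "An = concat (replicate n a)"
  have AnX: "An \<in> lists X" using a(1) unfolding An_def by auto
  have Anne: "An \<noteq> []" using ane n1 unfolding An_def by (cases n) auto
  define Ln where "Ln = length_set X R An"
  have nMx: "n * Mx \<in> Ln"
  proof -
    have "pres_eq X R (concat (replicate n bM)) An" unfolding An_def by (rule pe_rep[OF RX bM(2)])
    then show ?thesis unfolding Ln_def length_set_def using bM
      by (intro CollectI exI[of _ "concat (replicate n bM)"]) (auto simp: length_concat sum_list_replicate)
  qed
  have nm: "n * m \<in> Ln"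
  proof -
    have "pres_eq X R (concat (replicate n bm)) An" unfolding An_def by (rule pe_rep[OF RX bm(2)])
    then show ?thesis unfolding Ln_def length_set_def using bm
      by (intro CollectI exI[of _ "concat (replicate n bm)"]) (auto simp: length_concat sum_list_replicate)
  qed
  have no0: "0 \<notin> Ln"
  proof
    assume "0 \<in> Ln"
    then obtain b where "pres_eq X R b An" "length b = 0" unfolding Ln_def length_set_def by auto
    then have "pres_eq X R An []" using pres_eq.pe_sym by fastforce
    then show False using pe_nil[OF RX xX xnot fin] Anne by blast
  qed
  have LnS: "Ln \<inter> {1..} = Ln" using no0 by (auto simp: Suc_le_eq) (metis gr0I)
  have Lnmem: "Ln \<in> length_sets X R" unfolding Ln_def length_sets_def using AnX by auto
  have Lnne: "Ln \<noteq> {}" using nm by auto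
  have Lnfin: "finite Ln"
  proof (rule ccontr)
    assume "infinite Ln"
    then have "rho_set Ln = \<infinity>" using rho_inf LnS by metis
    then show False using rho_le_elast[OF Lnmem] fin by simp
  qed
  define A where "A = Max Ln"
  define B where "B = Min Ln"
  have AB: "rho_set Ln = ereal (real A / real B)" using rho_fin[of Ln] LnS Lnfin Lnne
    unfolding A_def B_def by simp
  have B1: "B \<ge> 1" using Lnfin Lnne no0 unfolding B_def
    by (metis Min_in Suc_le_eq not_gr_zero One_nat_def)
  have Age: "A \<ge> n * Mx" using Lnfin nMx unfolding A_def by simp
  have Ble: "B \<le> n * m" using Lnfin nm unfolding B_def by simp
  have "real A / real B \<le> real Mx / real m"
    using rho_le_elast[OF Lnmem] L0(2) rhoL0 AB by simp
  then have "real A * real m \<le> real Mx * real B" using B1 m1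
    by (simp add: divide_le_eq le_divide_eq field_simps)
  then have ABn: "A * m \<le> Mx * B" by (metis of_nat_le_iff of_nat_mult)
  have "A * m \<le> (n * Mx) * m"
  proof -
    have "Mx * B \<le> Mx * (n * m)" using Ble by (rule mult_left_mono) simp
    moreover have "Mx * (n * m) = (n * Mx) * m" by simp
    ultimately show ?thesis using ABn by (metis order_trans)
  qed
  then have "A \<le> n * Mx" using m1 by (simp only: mult_le_cancel2)
  then have Aeq: "A = n * Mx" using Age by simp
  have "B * Mx \<ge> (n * m) * Mx"
  proof -
    have "(n * Mx) * m \<le> Mx * B" using ABn Aeq by simp
    moreover have "(n * Mx) * m = (n * m) * Mx" "Mx * B = B * Mx" by simp_all
    ultimately show ?thesis by simp
  qed
  moreover have "Mx \<ge> 1" using m1 mMx by simp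
  ultimately have "B \<ge> n * m" by (simp only: mult_le_cancel2)
  then have Beq: "B = n * m" using Ble by simp
  define W where "W = replicate j x @ An"
  define LW where "LW = length_set X R W"
  have LWeq: "LW = (\<lambda>l. l + j) ` Ln"
    unfolding LW_def W_def Ln_def by (rule ls_shift[OF RX xX xnot fin AnX])
  have LWmem: "LW \<in> length_sets X R" unfolding LW_def length_sets_def W_def using AnX xX
    by (intro CollectI exI[of _ "replicate j x @ An"]) auto
  have LWS: "LW \<inter> {1..} = LW" using LWeq j1 by auto
  have LWfin: "finite LW" using LWeq Lnfin by simp
  have LWne: "LW \<noteq> {}" using LWeq Lnne by simp
  have MaxW: "Max LW = n * Mx + j"
  proof (rule Max_eqI[OF LWfin])
    show "y \<le> n * Mx + j" if "y \<in> LW" for y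
      using that LWeq Lnfin Aeq Max_ge[OF Lnfin] unfolding A_def by fastforce
    show "n * Mx + j \<in> LW" using LWeq nMx by auto
  qed
  have MinW: "Min LW = n * m + j"
  proof (rule Min_eqI[OF LWfin])
    show "n * m + j \<le> y" if "y \<in> LW" for y
      using that LWeq Lnfin Beq Min_le[OF Lnfin] unfolding B_def by fastforce
    show "n * m + j \<in> LW" using LWeq nm by auto
  qed
  have "rho_set LW = ereal (real (n * Mx + j) / real (n * m + j))"
    using rho_fin[of LW] LWS LWfin LWne MaxW MinW by simp
  also have "real (n * Mx + j) / real (n * m + j) = real_of_rat q"
  proof -
    have e1: "int (n * Mx + j) = (p - r) * int Mx + (r * int Mx - p * int m)"
      using nint jint by simp
    have e2: "int (n * m + j) = (p - r) * int m + (r * int Mx - p * int m)"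
      using nint jint by simp
    have key: "int (n * Mx + j) * r = p * int (n * m + j)"
      unfolding e1 e2 by algebra
    have "real (n * Mx + j) * real_of_int r = real_of_int p * real (n * m + j)"
      using arg_cong[OF key, of real_of_int] by simp
    moreover have "real (n * m + j) \<noteq> 0" using j1 by (simp only: of_nat_eq_0_iff)
    ultimately show ?thesis unfolding qpr using r0 by (subst frac_eq_eq) auto
  qed
  finally show "\<exists>L\<in>length_sets X R. rho_set L = ereal (real_of_rat q)" using LWmem by blast
qed

end
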